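(* Fix $\theta$ in the interior of $\Theta$ and suppose $\theta'\mapsto\lambda(\theta')$ is differentiable at $\theta$, so that $\nabla_\theta V(\theta;z)$ exists for every $z\in\mathbb{R}^{SA}$. Let $F:\mathbb{R}^{SA}\to\mathbb{R}\cup\{-\infty\}$ be a proper, upper semicontinuous, concave function that is finite and continuously differentiable on an open neighborhood of $\lambda(\theta)$. Then $\theta\mapsto R(\pi_\theta)$ is differentiable at $\theta$ and $$\nabla_\theta R(\pi_\theta)=\lim_{\delta\to0_+}\ \operatorname*{argmax}_{x\in\mathbb{R}^d}\ \inf_{z\in\mathbb{R}^{SA}}\Big\{V(\theta;z)+\delta\,\nabla_\theta V(\theta;z)^\top x-F^*(z)-\tfrac{\delta}{2}\|x\|^2\Big\}.$$
   Context: Finite MDP: finite state space $\mathcal S$ with $S=|\mathcal S|$, finite action space $\mathcal A$ with $A=|\mathcal A|$, transition probabilities $P_a(i,j)$ of moving from state $i$ to state $j$ under action $a$, initial state distribution $\xi$ on $\mathcal S$, discount factor $\gamma\in(0,1)$. A (stationary) policy $\pi$ assigns to each state $s$ a distribution $\pi(\cdot|s)$ on $\mathcal A$. The state-action occupancy measure of $\pi$ is $\lambda^\pi\in\mathbb{R}^{SA}$, $\lambda^\pi_{sa}=\sum_{t=0}^\infty\gamma^t\,\mathbb P(s_t=s,a_t=a\mid \pi, s_0\sim\xi)$, where $a_t\sim\pi(\cdot|s_t)$ and $s_{t+1}\sim P_{a_t}(s_t,\cdot)$. Policies are parametrized as $\pi_\theta$, $\theta\in\Theta\subset\mathbb{R}^d$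 with $\Theta$ convex; write $\lambda(\theta):=\lambda^{\pi_\theta}$. For a concave utility $F$, the objective is $R(\pi_\theta):=F(\lambda(\theta))$. For $z\in\mathbb{R}^{SA}$ (viewed as a reward function), $V(\theta;z):=\langle z,\lambda(\theta)\rangle=\mathbb E^{\pi_\theta}[\sum_t\gamma^t z_{s_ta_t}]$ is the cumulative discounted value of $\pi_\theta$ under reward $z$. The (concave) Fenchel dual is $F^*(z):=\inf_\lambda\{\langle\lambda,z\rangle-F(\lambda)\}$. $\|\cdot\|$ is the Euclidean norm. *)

theory Defs
  imports "HOL-Analysis.Analysis"
begin

text \<open>Transition kernel: P act i j = probability of moving from state i to state j under action act.\<close>
definition is_mdp :: "('act::finite \<Rightarrow> 's::finite \<Rightarrow> 's \<Rightarrow> real) \<Rightarrow> ('s \<Rightarrow> real) \<Rightarrow> real \<Rightarrow> bool" where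
  "is_mdp P xi gamma \<longleftrightarrow>
     (\<forall>a i j. 0 \<le> P a i j) \<and> (\<forall>a i. (\<Sum>j\<in>UNIV. P a i j) = 1) \<and>
     (\<forall>s. 0 \<le> xi s) \<and> (\<Sum>s\<in>UNIV. xi s) = 1 \<and> 0 < gamma \<and> gamma < 1"

definition is_policy :: "('s::finite \<Rightarrow> 'act::finite \<Rightarrow> real) \<Rightarrow> bool" where
  "is_policy pol \<longleftrightarrow> (\<forall>s a. 0 \<le> pol s a) \<and> (\<forall>s. (\<Sum>a\<in>UNIV. pol s a) = 1)"

fun state_dist :: "('act::finite \<Rightarrow> 's::finite \<Rightarrow> 's \<Rightarrow> real) \<Rightarrow> ('s \<Rightarrow> real) \<Rightarrow>
    ('s \<Rightarrow> 'act \<Rightarrow> real) \<Rightarrow> nat \<Rightarrow> 's \<Rightarrow> real" where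
  "state_dist P xi pol 0 s = xi s"
| "state_dist P xi pol (Suc t) s =
     (\<Sum>i\<in>UNIV. \<Sum>a\<in>UNIV. state_dist P xi pol t i * pol i a * P a i s)"

definition occupancy :: "('act::finite \<Rightarrow> 's::finite \<Rightarrow> 's \<Rightarrow> real) \<Rightarrow> ('s \<Rightarrow> real) \<Rightarrow> real \<Rightarrow>
    ('s \<Rightarrow> 'act \<Rightarrow> real) \<Rightarrow> real ^ ('s \<times> 'act)" where
  "occupancy P xi gamma pol =
     (\<chi> sa. \<Sum>t. gamma ^ t * state_dist P xi pol t (fst sa) * pol (fst sa) (snd sa))"

definition concave_ereal :: "('v::real_vector \<Rightarrow> ereal) \<Rightarrow> bool" where
  "concave_ereal F \<longleftrightarrow> convex {(x, r::real). ereal r \<le> F x}"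

definition proper_concave :: "('v::real_vector \<Rightarrow> ereal) \<Rightarrow> bool" where
  "proper_concave F \<longleftrightarrow> concave_ereal F \<and> (\<forall>x. F x \<noteq> \<infinity>) \<and> (\<exists>x. F x \<noteq> -\<infinity>)"

definition usc_ereal :: "('v::topological_space \<Rightarrow> ereal) \<Rightarrow> bool" where
  "usc_ereal F \<longleftrightarrow> (\<forall>x. Limsup (at x) F \<le> F x)"

definition fenchel_dual :: "('v::real_inner \<Rightarrow> ereal) \<Rightarrow> 'v \<Rightarrow> ereal" where
  "fenchel_dual F z = (INF l. ereal (inner l z) - F l)"

definition grad :: "('v::real_inner \<Rightarrow> real) \<Rightarrow> 'v \<Rightarrow> 'v" where
  "grad f x = (THE D. GDERIV f x :> D)"

end

theory Submission imports Defs begin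


lemma grad_eqI:
  fixes f :: "'v::real_inner \<Rightarrow> real"
  assumes "GDERIV f x :> D" shows "grad f x = D"
  unfolding grad_def
proof (rule the_equality)
  show "GDERIV f x :> D" by fact
  fix D' assume "GDERIV f x :> D'"
  then have "(\<lambda>h. inner h D') = (\<lambda>h. inner h D)"
    using assms unfolding gderiv_def by (rule has_derivative_unique)
  then have "inner (D' - D) D' = inner (D' - D) D" by metis
  then have "inner (D' - D) (D' - D) = 0" by (simp add: inner_diff_right)
  then show "D' = D" by simp
qed

lemma lin_repr:
  fixes L :: "'v::euclidean_space \<Rightarrow> real"
  assumes "linear L" shows "\<exists>D. \<forall>h. L h = inner h D"
proof
  show "\<forall>h. L h = inner h (\<Sum>b\<in>Basis. L b *\<^sub>R b)"
  proof
    fix h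
    have "L h = L (\<Sum>b\<in>Basis. inner h b *\<^sub>R b)" by (simp add: euclidean_representation)
    also have "\<dots> = (\<Sum>b\<in>Basis. inner h b * L b)"
      using assms by (simp add: linear_sum linear_scale)
    also have "\<dots> = inner h (\<Sum>b\<in>Basis. L b *\<^sub>R b)"
      by (simp add: inner_sum_right) (simp add: mult.commute)
    finally show "L h = inner h (\<Sum>b\<in>Basis. L b *\<^sub>R b)" .
  qed
qed

lemma grad_V:
  fixes lam :: "'a::euclidean_space \<Rightarrow> 'b::euclidean_space"
  assumes "(lam has_derivative L) (at th)"
  shows "inner h (grad (\<lambda>t. inner z (lam t)) th) = inner z (L h)"
proof -
  have d: "((\<lambda>t. inner z (lam t)) has_derivative (\<lambda>h. inner z (L h))) (at th)"
    using assms by (auto intro!: derivative_eq_intros)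
  have "linear (\<lambda>h. inner z (L h))"
    using has_derivative_linear[OF d] .
  then obtain D where D: "\<forall>h. inner z (L h) = inner h D" using lin_repr by blast
  have "GDERIV (\<lambda>t. inner z (lam t)) th :> D"
    unfolding gderiv_def using d D by (metis (no_types, lifting) ext)
  then have "grad (\<lambda>t. inner z (lam t)) th = D" by (rule grad_eqI)
  then show ?thesis using D by simp
qed

lemma dirderiv:
  fixes f :: "'v::real_inner \<Rightarrow> real"
  assumes "GDERIV f x :> D"
  shows "((\<lambda>t. (f (x + t *\<^sub>R d) - f x) / t) \<longlongrightarrow> inner d D) (at_right 0)"
proof -
  have l: "((\<lambda>t. x + t *\<^sub>R d) has_derivative (\<lambda>t. t *\<^sub>R d)) (at 0)"
    by (auto intro!: derivative_eq_intros)
  have f: "(f has_derivative (\<lambda>h. inner h D)) (at (x + 0 *\<^sub>R d))"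
    using assms unfolding gderiv_def by simp
  have "((\<lambda>t. f (x + t *\<^sub>R d)) has_derivative (\<lambda>t. inner (t *\<^sub>R d) D)) (at 0)"
    using diff_chain_at[OF l f] by (simp add: o_def)
  then have "((\<lambda>t. f (x + t *\<^sub>R d)) has_real_derivative inner d D) (at 0)"
  proof -
    have "(\<lambda>t. inner (t *\<^sub>R d) D) = (\<lambda>t. t * inner d D)" by (simp add: fun_eq_iff)
    also have "\<dots> = (*) (inner d D)" by (simp add: fun_eq_iff mult.commute)
    finally show ?thesis using \<open>((\<lambda>t. f (x + t *\<^sub>R d)) has_derivative (\<lambda>t. inner (t *\<^sub>R d) D)) (at 0)\<close>
      unfolding has_field_derivative_def by simp
  qed
  then have "((\<lambda>h. (f (x + (0 + h) *\<^sub>R d) - f (x + 0 *\<^sub>R d)) / h) \<longlongrightarrow> inner d D) (at 0)"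
    unfolding DERIV_def .
  then have "((\<lambda>h. (f (x + h *\<^sub>R d) - f x) / h) \<longlongrightarrow> inner d D) (at 0)" by simp
  then show ?thesis by (rule tendsto_mono[OF at_le, rotated]) simp
qed



lemma ev_in_U:
  fixes x :: "'v::real_normed_vector"
  assumes "open U" "x \<in> U"
  shows "eventually (\<lambda>t. x + t *\<^sub>R d \<in> U) (at_right (0::real))"
proof -
  have "((\<lambda>t. x + t *\<^sub>R d) \<longlongrightarrow> x + 0 *\<^sub>R d) (at_right (0::real))"
    by (intro tendsto_intros)
  then have "((\<lambda>t. x + t *\<^sub>R d) \<longlongrightarrow> x) (at_right (0::real))" by simp
  then show ?thesis using assms topological_tendstoD by blast
qed

lemma supergrad:
  fixes F :: "'v::real_inner \<Rightarrow> ereal"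
  assumes conc: "concave_ereal F" and U: "open U" "x \<in> U" and fin: "\<forall>y\<in>U. \<bar>F y\<bar> \<noteq> \<infinity>"
    and D: "GDERIV (\<lambda>w. real_of_ereal (F w)) x :> D" and nl: "F l \<noteq> \<infinity>"
  shows "F l \<le> ereal (real_of_ereal (F x) + inner (l - x) D)"
proof (cases "F l")
  case MInf then show ?thesis by simp
next
  case PInf then show ?thesis using nl by simp
next
  case (real r)
  define fx where "fx = real_of_ereal (F x)"
  define d where "d = l - x"
  have Fx: "F x = ereal fx" using fin U unfolding fx_def by (cases "F x") auto
  have hyp: "ereal (fx + t * (r - fx)) \<le> F (x + t *\<^sub>R d)" if t: "0 \<le> t" "t \<le> 1" for t
  proof -
    have m1: "(x, fx) \<in> {(x, r::real). ereal r \<le> F x}" using Fx by simp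
    have m2: "(l, r) \<in> {(x, r::real). ereal r \<le> F x}" using real by simp
    have "(1 - t) *\<^sub>R (x, fx) + t *\<^sub>R (l, r) \<in> {(x, r::real). ereal r \<le> F x}"
      using conc m1 m2 t unfolding concave_ereal_def convex_def by (metis diff_add_cancel diff_ge_0_iff_ge add.commute)
    moreover have "(1 - t) *\<^sub>R (x, fx) + t *\<^sub>R (l, r) = (x + t *\<^sub>R d, fx + t * (r - fx))"
      unfolding d_def by (simp add: algebra_simps)
    ultimately show ?thesis by simp
  qed
  have lim: "((\<lambda>t. (real_of_ereal (F (x + t *\<^sub>R d)) - real_of_ereal (F x)) / t) \<longlongrightarrow> inner d D) (at_right 0)"
    using dirderiv[OF D] .
  have ev: "eventually (\<lambda>t. r - fx \<le> (real_of_ereal (F (x + t *\<^sub>R d)) - real_of_ereal (F x)) / t) (at_right 0)"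
  proof -
    have e1: "eventually (\<lambda>t::real. 0 < t \<and> t < 1) (at_right 0)"
      by (simp add: eventually_at_right_field) (metis zero_less_one)
    show ?thesis using eventually_conj[OF e1 ev_in_U[OF U, of d]]
    proof (rule eventually_mono)
      fix t :: real assume a: "(0 < t \<and> t < 1) \<and> x + t *\<^sub>R d \<in> U"
      have "\<bar>F (x + t *\<^sub>R d)\<bar> \<noteq> \<infinity>" using fin a by simp
      then obtain v where v: "F (x + t *\<^sub>R d) = ereal v" by (cases "F (x + t *\<^sub>R d)") auto
      have "fx + t * (r - fx) \<le> v" using hyp[of t] a v by simp
      then have "t * (r - fx) \<le> v - fx" by simp
      then have "r - fx \<le> (v - fx) / t" using a by (simp add: field_simps)
      then show "r - fx \<le> (real_of_ereal (F (x + t *\<^sub>R d)) - real_of_ereal (F x)) / t"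
        using v Fx by simp
    qed
  qed
  have "r - fx \<le> inner d D"
    using tendsto_lowerbound[OF lim ev] by simp
  then show ?thesis using real unfolding fx_def d_def by simp
qed



lemma ereal_term: "c \<noteq> \<infinity> \<Longrightarrow> ereal a + ereal b - c - ereal d =
   (if c = -\<infinity> then \<infinity> else ereal (a + b - real_of_ereal c - d))"
  by (cases c) auto

lemma quad_mid:
  fixes x1 x2 G :: "'a::real_inner"
  shows "A + k * inner G ((1/2) *\<^sub>R (x1 + x2)) - c - k/2 * (norm ((1/2) *\<^sub>R (x1 + x2)))\<^sup>2
   = ((A + k * inner G x1 - c - k/2 * (norm x1)\<^sup>2) + (A + k * inner G x2 - c - k/2 * (norm x2)\<^sup>2))/2
     + k/8 * (norm (x1 - x2))\<^sup>2"
  by (simp add: power2_norm_eq_inner inner_add_left inner_add_right inner_diff_left inner_diff_right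
      inner_commute algebra_simps) (simp add: field_simps)

theorem theorem1:
  fixes P :: "'act::finite \<Rightarrow> 's::finite \<Rightarrow> 's \<Rightarrow> real"
    and xi :: "'s \<Rightarrow> real"
    and gamma :: real
    and Theta :: "(real ^ 'd::finite) set"
    and pol :: "real ^ 'd \<Rightarrow> 's \<Rightarrow> 'act \<Rightarrow> real"
    and F :: "real ^ ('s \<times> 'act) \<Rightarrow> ereal"
    and \<theta> :: "real ^ 'd"
  defines "lam \<equiv> (\<lambda>t. occupancy P xi gamma (pol t))"
  defines "V \<equiv> (\<lambda>t z. inner z (lam t))"
  defines "R \<equiv> (\<lambda>t. F (lam t))"
  defines "obj \<equiv> (\<lambda>\<delta> x. INF z. ereal (V \<theta> z) + ereal (\<delta> * inner (grad (\<lambda>t. V t z) \<theta>) x)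
                                 - fenchel_dual F z - ereal (\<delta> / 2 * (norm x)\<^sup>2))"
  assumes mdp: "is_mdp P xi gamma"
    and convTheta: "convex Theta"
    and pols: "\<forall>t\<in>Theta. is_policy (pol t)"
    and int: "\<theta> \<in> interior Theta"
    and diff: "lam differentiable (at \<theta>)"
    and Fproper: "proper_concave F"
    and Fusc: "usc_ereal F"
    and Fsmooth: "\<exists>U g. open U \<and> lam \<theta> \<in> U \<and> (\<forall>y\<in>U. \<bar>F y\<bar> \<noteq> \<infinity>) \<and>
                     (\<forall>y\<in>U. GDERIV (\<lambda>w. real_of_ereal (F w)) y :> g y) \<and> continuous_on U g"
  shows "\<exists>gR. GDERIV (\<lambda>t. real_of_ereal (R t)) \<theta> :> gR \<and>
           (\<forall>\<delta>>0. \<exists>!x. \<forall>y. obj \<delta> y \<le> obj \<delta> x) \<and>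
           ((\<lambda>\<delta>. THE x. \<forall>y. obj \<delta> y \<le> obj \<delta> x) \<longlongrightarrow> gR) (at_right 0)"
proof -
  obtain L where hL: "(lam has_derivative L) (at \<theta>)" using diff unfolding differentiable_def by blast
  have linL: "linear L" using has_derivative_linear[OF hL] .
  obtain U gF where U: "open U" "lam \<theta> \<in> U" and finU: "\<forall>y\<in>U. \<bar>F y\<bar> \<noteq> \<infinity>"
    and gFd: "\<forall>y\<in>U. GDERIV (\<lambda>w. real_of_ereal (F w)) y :> gF y"
    using Fsmooth by blast
  define \<Lambda> where "\<Lambda> = lam \<theta>"
  define z0 where "z0 = gF \<Lambda>"
  define f\<Lambda> where "f\<Lambda> = real_of_ereal (F \<Lambda>)"
  have FL: "F \<Lambda> = ereal f\<Lambda>" using finU U unfolding f\<Lambda>_def \<Lambda>_def by (cases "F (lam \<theta>)") auto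
  have dF: "GDERIV (\<lambda>w. real_of_ereal (F w)) \<Lambda> :> z0" using gFd U unfolding z0_def \<Lambda>_def by blast
  define G where "G = (\<lambda>z. grad (\<lambda>t. V t z) \<theta>)"
  have GV: "inner h (G z) = inner z (L h)" for h z
    unfolding G_def V_def using grad_V[OF hL] by blast
  define g where "g = G z0"
  have Vt: "V \<theta> z = inner z \<Lambda>" for z unfolding V_def \<Lambda>_def by simp
  define Fs where "Fs = fenchel_dual F"
  have obj_eq: "obj \<delta> x = (INF z. ereal (inner z \<Lambda>) + ereal (\<delta> * inner (G z) x) - Fs z - ereal (\<delta> / 2 * (norm x)\<^sup>2))"
    for \<delta> x unfolding obj_def G_def Fs_def Vt ..
  have nPinf: "F l \<noteq> \<infinity>" for l using Fproper unfolding proper_concave_def by blast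
  have Fs_le: "Fs z \<le> ereal (inner y z) - F y" for y z
    unfolding Fs_def fenchel_dual_def by (rule INF_lower) simp
  have Fs_ninf: "Fs z \<noteq> \<infinity>" for z
    using Fs_le[of z \<Lambda>] FL by auto
  have Fs_z0: "ereal (inner \<Lambda> z0 - f\<Lambda>) \<le> Fs z0"
    unfolding Fs_def fenchel_dual_def
  proof (rule INF_greatest)
    fix l :: "real ^ ('s \<times> 'act)"
    have "F l \<le> ereal (f\<Lambda> + inner (l - \<Lambda>) z0)"
      using supergrad[OF _ U(1) _ finU dF nPinf[of l]] Fproper U(2)
      unfolding proper_concave_def f\<Lambda>_def \<Lambda>_def by blast
    then show "ereal (inner \<Lambda> z0 - f\<Lambda>) \<le> ereal (inner l z0) - F l"
      using nPinf[of l] by (cases "F l") (auto simp: inner_diff_left)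
  qed
  have gR: "GDERIV (\<lambda>t. real_of_ereal (R t)) \<theta> :> g"
  proof -
    have "((\<lambda>w. real_of_ereal (F w)) \<circ> lam has_derivative (\<lambda>h. inner (L h) z0)) (at \<theta>)"
      using diff_chain_at[OF hL] dF unfolding gderiv_def \<Lambda>_def by (simp add: o_def)
    moreover have "(\<lambda>h. inner (L h) z0) = (\<lambda>h. inner h g)"
      using GV unfolding g_def by (simp add: fun_eq_iff inner_commute)
    ultimately show ?thesis unfolding gderiv_def R_def o_def by simp
  qed
  have UB: "obj \<delta> x \<le> ereal (f\<Lambda> + \<delta> * inner g x - \<delta> / 2 * (norm x)\<^sup>2)" for \<delta> x
  proof -
    have "obj \<delta> x \<le> ereal (inner z0 \<Lambda>) + ereal (\<delta> * inner (G z0) x) - Fs z0 - ereal (\<delta> / 2 * (norm x)\<^sup>2)"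
      unfolding obj_eq by (rule INF_lower) simp
    also have "\<dots> \<le> ereal (f\<Lambda> + \<delta> * inner g x - \<delta> / 2 * (norm x)\<^sup>2)"
      using Fs_z0 Fs_ninf[of z0] unfolding g_def
      by (cases "Fs z0") (auto simp: inner_commute)
    finally show ?thesis .
  qed
  have LB: "F (\<Lambda> + \<delta> *\<^sub>R L x) - ereal (\<delta> / 2 * (norm x)\<^sup>2) \<le> obj \<delta> x" for \<delta> x
    unfolding obj_eq
  proof (rule INF_greatest)
    fix z
    let ?y = "\<Lambda> + \<delta> *\<^sub>R L x"
    have iy: "inner ?y z = inner z \<Lambda> + \<delta> * inner (G z) x"
      proof -
      have "inner ?y z = inner \<Lambda> z + \<delta> * inner (L x) z" by (simp add: inner_add_left)
      also have "\<dots> = inner z \<Lambda> + \<delta> * inner (G z) x"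
        using GV[of x z] by (metis inner_commute)
      finally show ?thesis .
    qed
    show "F ?y - ereal (\<delta> / 2 * (norm x)\<^sup>2)
          \<le> ereal (inner z \<Lambda>) + ereal (\<delta> * inner (G z) x) - Fs z - ereal (\<delta> / 2 * (norm x)\<^sup>2)"
    proof (cases "Fs z")
      case (real c)
      show ?thesis
      proof (cases "F ?y")
        case (real r)
        then have "c \<le> inner ?y z - r" using Fs_le[of z ?y] \<open>Fs z = ereal c\<close> by simp
        then show ?thesis using real \<open>Fs z = ereal c\<close> iy by simp
      qed (use nPinf in auto)
    qed (use Fs_ninf in auto)
  qed
  have o0: "ereal f\<Lambda> \<le> obj \<delta> 0" for \<delta>
    using LB[of \<delta> 0] FL linear_0[OF linL] by simp
  have cs: "inner g y \<le> norm g * norm y" for y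
    using norm_cauchy_schwarz[of g y] .
  have ub: "obj \<delta> y \<le> ereal (f\<Lambda> + \<delta> * (norm g)\<^sup>2 / 2)" if "\<delta> > 0" for \<delta> y
  proof -
    have "0 \<le> (norm g - norm y)\<^sup>2" by simp
    then have "norm g * norm y \<le> ((norm g)\<^sup>2 + (norm y)\<^sup>2) / 2" by (simp add: power2_diff)
    then have "inner g y - (norm y)\<^sup>2 / 2 \<le> (norm g)\<^sup>2 / 2" using cs[of y] by simp
    then have "\<delta> * (inner g y - (norm y)\<^sup>2 / 2) \<le> \<delta> * ((norm g)\<^sup>2 / 2)"
      using that by (simp add: mult_left_mono)
    then have "f\<Lambda> + \<delta> * inner g y - \<delta> / 2 * (norm y)\<^sup>2 \<le> f\<Lambda> + \<delta> * (norm g)\<^sup>2 / 2"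
      by (simp add: algebra_simps)
    then show ?thesis using UB[of \<delta> y] order_trans by fastforce
  qed
  have quadval: "\<And>z c x. Fs z = ereal c \<Longrightarrow> ereal (inner z \<Lambda>) + ereal (\<delta> * inner (G z) x) - Fs z - ereal (\<delta> / 2 * (norm x)\<^sup>2)
      = ereal (inner z \<Lambda> + \<delta> * inner (G z) x - c - \<delta> / 2 * (norm x)\<^sup>2)" for \<delta>
    by simp
  have minfval: "\<And>z x. Fs z = -\<infinity> \<Longrightarrow> ereal (inner z \<Lambda>) + ereal (\<delta> * inner (G z) x) - Fs z - ereal (\<delta> / 2 * (norm x)\<^sup>2)
      = \<infinity>" for \<delta>
    by simp
  have exist: "\<exists>x. \<forall>y. obj \<delta> y \<le> obj \<delta> x" if d0: "\<delta> > 0" for \<delta>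
  proof -
    define K where "K = cball (0::real^'d) (2 * norm g)"
    have out: "obj \<delta> y < ereal f\<Lambda>" if "y \<notin> K" for y
    proof -
      have ny: "norm y > 2 * norm g" using that unfolding K_def by simp
      have "0 < norm y" using ny norm_ge_zero[of g] by linarith
      then have "(2 * norm g) * norm y < norm y * norm y"
        using mult_strict_right_mono[OF ny] by blast
      then have "norm g * norm y < (norm y)\<^sup>2 / 2"
        by (simp add: power2_eq_square)
      then have "inner g y - (norm y)\<^sup>2 / 2 < 0" using cs[of y] by simp
      then have "\<delta> * (inner g y - (norm y)\<^sup>2 / 2) < 0" using d0 by (simp add: mult_pos_neg)
      then have "f\<Lambda> + \<delta> * inner g y - \<delta> / 2 * (norm y)\<^sup>2 < f\<Lambda>" by (simp add: algebra_simps)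
      then show ?thesis using UB[of \<delta> y] ereal_less_eq(3) le_less_trans less_ereal.simps(1) by blast
    qed
    define M where "M = (SUP y\<in>K. obj \<delta> y)"
    have M1: "ereal f\<Lambda> \<le> M" unfolding M_def
      using o0[of \<delta>] by (rule order_trans) (rule SUP_upper, simp add: K_def)
    have M2: "M \<le> ereal (f\<Lambda> + \<delta> * (norm g)\<^sup>2 / 2)" unfolding M_def
      by (rule SUP_least) (rule ub[OF d0])
    obtain m where Mm: "M = ereal m" using M1 M2 by (cases M) auto
    have "\<forall>n. \<exists>y\<in>K. ereal (m - inverse (real (Suc n))) < obj \<delta> y"
    proof
      fix n
      have "ereal (m - inverse (real (Suc n))) < M" using Mm by simp
      then show "\<exists>y\<in>K. ereal (m - inverse (real (Suc n))) < obj \<delta> y"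
        unfolding M_def by (simp add: less_SUP_iff)
    qed
    then obtain xs where xs: "\<And>n. xs n \<in> K" "\<And>n. ereal (m - inverse (real (Suc n))) < obj \<delta> (xs n)"
      by metis
    have "compact K" unfolding K_def by simp
    then obtain l r where l: "l \<in> K" "strict_mono r" "(xs \<circ> r) \<longlonglongrightarrow> l"
      using seq_compactE[OF compact_imp_seq_compact] xs(1) by metis
    have ml: "ereal m \<le> obj \<delta> l"
      unfolding obj_eq
    proof (rule INF_greatest)
      fix z
      show "ereal m \<le> ereal (inner z \<Lambda>) + ereal (\<delta> * inner (G z) l) - Fs z - ereal (\<delta> / 2 * (norm l)\<^sup>2)"
      proof (cases "Fs z")
        case (real c)
        define h where "h = (\<lambda>x. inner z \<Lambda> + \<delta> * inner (G z) x - c - \<delta> / 2 * (norm x)\<^sup>2)"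
        have hn: "m - inverse (real (Suc n)) \<le> h (xs n)" for n
        proof -
          have "obj \<delta> (xs n) \<le> ereal (inner z \<Lambda>) + ereal (\<delta> * inner (G z) (xs n)) - Fs z - ereal (\<delta> / 2 * (norm (xs n))\<^sup>2)"
            unfolding obj_eq by (rule INF_lower) simp
          then have "obj \<delta> (xs n) \<le> ereal (h (xs n))" unfolding h_def using real by simp
          then show ?thesis using xs(2)[of n] by (meson ereal_less_eq(3) less_imp_le order_less_le_trans)
        qed
        have t1: "(\<lambda>n. h ((xs \<circ> r) n)) \<longlonglongrightarrow> h l"
          unfolding h_def using l(3) by (intro tendsto_intros)
        have t2: "(\<lambda>n. m - inverse (real (Suc (r n)))) \<longlonglongrightarrow> m - 0"
          using LIMSEQ_subseq_LIMSEQ[OF LIMSEQ_inverse_real_of_nat l(2)]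
          by (intro tendsto_intros) (simp add: o_def)
        have "m - 0 \<le> h l"
          by (rule LIMSEQ_le[OF t2 t1]) (use hn in \<open>auto simp: o_def\<close>)
        then show ?thesis unfolding h_def using real by simp
      qed (use Fs_ninf in auto)
    qed
    show ?thesis
    proof (intro exI allI)
      fix y
      show "obj \<delta> y \<le> obj \<delta> l"
      proof (cases "y \<in> K")
        case True
        then have "obj \<delta> y \<le> M" unfolding M_def by (rule SUP_upper)
        then show ?thesis using Mm ml by simp
      next
        case False
        have "obj \<delta> y < ereal m" using out[of y] M1 Mm False by (meson less_le_trans)
        then show ?thesis using ml by simp
      qed
    qed
  qed
  have uniq: "x1 = x2" if d0: "\<delta> > 0" and m1: "\<forall>y. obj \<delta> y \<le> obj \<delta> x1" and m2: "\<forall>y. obj \<delta> y \<le> obj \<delta> x2"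
    for \<delta> x1 x2
  proof -
    have e: "obj \<delta> x1 = obj \<delta> x2" using m1 m2 by (simp add: order_antisym)
    have "ereal f\<Lambda> \<le> obj \<delta> x1" using o0[of \<delta>] m1 order_trans by blast
    then obtain m where m: "obj \<delta> x1 = ereal m" using ub[OF d0, of x1] by (cases "obj \<delta> x1") auto
    define c0 where "c0 = (1/2) *\<^sub>R (x1 + x2)"
    have "ereal (m + \<delta>/8 * (norm (x1 - x2))\<^sup>2) \<le> obj \<delta> c0"
      unfolding obj_eq
    proof (rule INF_greatest)
      fix z
      show "ereal (m + \<delta>/8 * (norm (x1 - x2))\<^sup>2) \<le> ereal (inner z \<Lambda>) + ereal (\<delta> * inner (G z) c0) - Fs z - ereal (\<delta> / 2 * (norm c0)\<^sup>2)"
      proof (cases "Fs z")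
        case (real c)
        define h where "h = (\<lambda>x. inner z \<Lambda> + \<delta> * inner (G z) x - c - \<delta> / 2 * (norm x)\<^sup>2)"
        have hx: "m \<le> h x" if "obj \<delta> x = ereal m" for x
        proof -
          have "obj \<delta> x \<le> ereal (inner z \<Lambda>) + ereal (\<delta> * inner (G z) x) - Fs z - ereal (\<delta> / 2 * (norm x)\<^sup>2)"
            unfolding obj_eq by (rule INF_lower) simp
          then show ?thesis unfolding h_def using real that by simp
        qed
        have "h c0 = (h x1 + h x2) / 2 + \<delta>/8 * (norm (x1 - x2))\<^sup>2"
          unfolding h_def c0_def by (rule quad_mid)
        then have "m + \<delta>/8 * (norm (x1 - x2))\<^sup>2 \<le> h c0"
          using hx[OF m] hx[of x2] m e by simp
        then show ?thesis unfolding h_def using real by simp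
      qed (use Fs_ninf in auto)
    qed
    then have "ereal (m + \<delta>/8 * (norm (x1 - x2))\<^sup>2) \<le> ereal m" using m1 m order_trans by metis
    then have "\<delta>/8 * (norm (x1 - x2))\<^sup>2 \<le> 0" by simp
    then have "(norm (x1 - x2))\<^sup>2 \<le> 0" using d0 by (simp add: mult_le_0_iff)
    then show ?thesis by simp
  qed
  have EU: "\<forall>\<delta>>0. \<exists>!x. \<forall>y. obj \<delta> y \<le> obj \<delta> x"
    using exist uniq by blast
  define X where "X = (\<lambda>\<delta>. THE x. \<forall>y. obj \<delta> y \<le> obj \<delta> x)"
  have Xmax: "\<forall>y. obj \<delta> y \<le> obj \<delta> (X \<delta>)" if "\<delta> > 0" for \<delta>
    unfolding X_def using theI'[OF EU[rule_format, OF that]] .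
  have lim: "(X \<longlongrightarrow> g) (at_right 0)"
    unfolding tendsto_iff
  proof (intro allI impI)
    fix \<epsilon> :: real assume \<epsilon>: "\<epsilon> > 0"
    define \<eta> where "\<eta> = \<epsilon>\<^sup>2 / 4"
    have \<eta>: "\<eta> > 0" using \<epsilon> unfolding \<eta>_def by simp
    define w where "w = L g"
    have wz: "inner w z0 = inner g g"
      using GV[of g z0] unfolding w_def g_def by (simp add: inner_commute)
    have dl: "((\<lambda>t. (real_of_ereal (F (\<Lambda> + t *\<^sub>R w)) - real_of_ereal (F \<Lambda>)) / t) \<longlongrightarrow> inner w z0) (at_right 0)"
      using dirderiv[OF dF] .
    have e1: "eventually (\<lambda>t. inner w z0 - \<eta> < (real_of_ereal (F (\<Lambda> + t *\<^sub>R w)) - real_of_ereal (F \<Lambda>)) / t) (at_right 0)"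
      using order_tendstoD(1)[OF dl] \<eta> by simp
    have e2: "eventually (\<lambda>t. \<Lambda> + t *\<^sub>R w \<in> U) (at_right (0::real))"
      using ev_in_U[OF U(1)] U(2) unfolding \<Lambda>_def by blast
    show "eventually (\<lambda>\<delta>. dist (X \<delta>) g < \<epsilon>) (at_right 0)"
      using eventually_conj[OF eventually_conj[OF e1 e2] eventually_at_right_less]
    proof (rule eventually_mono)
      fix \<delta> :: real
      assume a: "(inner w z0 - \<eta> < (real_of_ereal (F (\<Lambda> + \<delta> *\<^sub>R w)) - real_of_ereal (F \<Lambda>)) / \<delta>
         \<and> \<Lambda> + \<delta> *\<^sub>R w \<in> U) \<and> 0 < \<delta>"
      define x where "x = X \<delta>"
      obtain v where v: "F (\<Lambda> + \<delta> *\<^sub>R w) = ereal v"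
        using finU a by (cases "F (\<Lambda> + \<delta> *\<^sub>R w)") auto
      have "inner g g - \<eta> < (v - f\<Lambda>) / \<delta>" using a v FL wz unfolding f\<Lambda>_def by simp
      then have v1: "\<delta> * (inner g g - \<eta>) < v - f\<Lambda>" using a by (simp add: field_simps)
      have "ereal (v - \<delta> / 2 * (norm g)\<^sup>2) \<le> obj \<delta> g" using LB[of \<delta> g] v unfolding w_def by simp
      also have "\<dots> \<le> obj \<delta> x" using Xmax[of \<delta>] a unfolding x_def by blast
      also have "\<dots> \<le> ereal (f\<Lambda> + \<delta> * inner g x - \<delta> / 2 * (norm x)\<^sup>2)" by (rule UB)
      finally have v2: "v - \<delta> / 2 * (norm g)\<^sup>2 \<le> f\<Lambda> + \<delta> * inner g x - \<delta> / 2 * (norm x)\<^sup>2" by simp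
      have "\<delta> * (inner g g / 2 - \<eta>) < \<delta> * (inner g x - (norm x)\<^sup>2 / 2)"
        using v1 v2 by (simp add: power2_norm_eq_inner algebra_simps)
      then have "inner g g / 2 - \<eta> < inner g x - (norm x)\<^sup>2 / 2" using a by simp
      moreover have "(norm (x - g))\<^sup>2 = (norm x)\<^sup>2 - 2 * inner g x + inner g g"
        by (simp add: power2_norm_eq_inner inner_diff_left inner_diff_right inner_commute)
      ultimately have "(norm (x - g))\<^sup>2 < 2 * \<eta>" by simp
      also have "\<dots> < \<epsilon>\<^sup>2"
      proof -
        have "2 * \<eta> = \<epsilon>\<^sup>2 / 2" unfolding \<eta>_def by simp
        moreover have "0 < \<epsilon>\<^sup>2" using \<epsilon> by simp
        ultimately show ?thesis by linarith
      qed
      finally have sq: "(norm (x - g))\<^sup>2 < \<epsilon>\<^sup>2" .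
      have "norm (x - g) < \<epsilon>" using power2_less_imp_less[OF sq] \<epsilon> by linarith
      then show "dist (X \<delta>) g < \<epsilon>" unfolding x_def by (simp add: dist_norm)
    qed
  qed
  show ?thesis using gR EU lim unfolding X_def by blast
qed

end
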